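(* Let $d\ge 2$ and let $A$ be a finite set of hyperplanes in $\mathbb{R}^d$. For every open halfspace $S_1$ and every set $S_2\subseteq\mathbb{R}^d$, $$\mu_A(S_1\cup S_2)\le R_d\big(\mu_A(S_1)+1,\ \mu_A(S_2)+1\big)-1.$$
   Context: For a finite set $A$ of hyperplanes in $\mathbb{R}^d$, $V(A)$ (the vertices of the arrangement) is the set of points that are the unique common point of some $d$ hyperplanes of $A$. For $S\subseteq\mathbb{R}^d$, $\mu_A(S)=\max\{|A'| : A'\subseteq A,\ V(A')\subseteq S\}$. For positive integers $p,a,b$, $R_p(a,b)$ is the hypergraph Ramsey number: the least $R$ such that for every set $S$ of size $R$ and every 2-colouring of the $p$-element subsets of $S$ with colours 1 and 2, there is either an $a$-element subset all of whose $p$-subsets have colour 1 or a $b$-element subset all of whose $p$-subsets have colour 2. *)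

theory Defs
  imports "HOL-Analysis.Analysis"
begin

definition is_hyperplane :: "'a::euclidean_space set \<Rightarrow> bool" where
  "is_hyperplane H \<longleftrightarrow> (\<exists>a b. a \<noteq> 0 \<and> H = {x. inner a x = b})"

definition is_open_halfspace :: "'a::euclidean_space set \<Rightarrow> bool" where
  "is_open_halfspace S \<longleftrightarrow> (\<exists>a b. a \<noteq> 0 \<and> S = {x. inner a x > b})"

definition vertices :: "'a::euclidean_space set set \<Rightarrow> 'a set" where
  "vertices A = {p. \<exists>B. B \<subseteq> A \<and> card B = DIM('a) \<and> \<Inter>B = {p}}"

definition mu :: "'a::euclidean_space set set \<Rightarrow> 'a set \<Rightarrow> nat" where
  "mu A S = Max {card A' | A'. A' \<subseteq> A \<and> vertices A' \<subseteq> S}"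

definition ramsey_prop :: "nat \<Rightarrow> nat \<Rightarrow> nat \<Rightarrow> nat \<Rightarrow> bool" where
  "ramsey_prop p a b R \<longleftrightarrow>
     (\<forall>S::nat set. finite S \<and> card S = R \<longrightarrow>
       (\<forall>f :: nat set \<Rightarrow> nat. (\<forall>e. e \<subseteq> S \<and> card e = p \<longrightarrow> f e \<in> {1,2}) \<longrightarrow>
          (\<exists>T\<subseteq>S. card T = a \<and> (\<forall>e. e \<subseteq> T \<and> card e = p \<longrightarrow> f e = 1)) \<or>
          (\<exists>T\<subseteq>S. card T = b \<and> (\<forall>e. e \<subseteq> T \<and> card e = p \<longrightarrow> f e = 2))))"

definition ramsey_number :: "nat \<Rightarrow> nat \<Rightarrow> nat \<Rightarrow> nat" where
  "ramsey_number p a b = (LEAST R. ramsey_prop p a b R)"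

end

theory Submission
  imports Defs "HOL-Library.Ramsey"
begin

lemma preimage_sub:
  assumes "inj_on g X" "B \<subseteq> g ` X"
  shows "\<exists>e\<subseteq>X. g ` e = B \<and> card e = card B"
proof -
  let ?e = "X \<inter> g -` B"
  have "g ` ?e = B" using assms(2) by auto
  moreover have "card ?e = card B"
    using card_image[of g ?e] assms(1) calculation by (metis inf_le1 inj_on_subset)
  ultimately show ?thesis by blast
qed

lemma ramsey_prop_exists: "\<exists>R. ramsey_prop p a b R"
proof -
  obtain N :: nat where N: "partn_lst {..<N} [a,b] p" using ramsey_full by blast
  have "ramsey_prop p a b N"
    unfolding ramsey_prop_def
  proof (intro allI impI)
    fix S :: "nat set" and f :: "nat set \<Rightarrow> nat"
    assume S: "finite S \<and> card S = N"
      and f: "\<forall>e. e \<subseteq> S \<and> card e = p \<longrightarrow> f e \<in> {1,2}"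
    obtain g where g: "bij_betw g {0..<N} S"
      using ex_bij_betw_nat_finite S by blast
    have g': "bij_betw g {..<N} S" using g by (simp add: atLeast0LessThan)
    define h where "h e = (if f (g ` e) = 1 then 0 else 1::nat)" for e
    have "h \<in> nsets {..<N} p \<rightarrow> {..<length [a,b]}" by (auto simp: h_def)
    then obtain i H where i: "i < length [a,b]" and H: "H \<in> nsets {..<N} ([a,b]!i)"
       and hH: "h ` (nsets H p) \<subseteq> {i}"
      using partn_lstE[OF N] by blast
    have Hsub: "H \<subseteq> {..<N}" and cH: "card H = [a,b]!i" and fH: "finite H"
      using H by (auto simp: nsets_def)
    have inj: "inj_on g H" using g' Hsub bij_betw_imp_inj_on inj_on_subset by blast
    have TS: "g ` H \<subseteq> S" using g' Hsub bij_betw_imp_surj_on by blast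
    have cT: "card (g ` H) = [a,b]!i" using card_image[OF inj] cH by simp
    have col: "h e' = i" if "e' \<subseteq> H" "card e' = p" for e'
    proof -
      have "finite e'" using fH that finite_subset by blast
      then have "e' \<in> nsets H p" using that by (auto simp: nsets_def)
      then show ?thesis using hH by blast
    qed
    have key: "\<exists>e'\<subseteq>H. card e' = p \<and> g ` e' = e" if "e \<subseteq> g ` H" "card e = p" for e
      using preimage_sub[OF inj that(1)] that(2) by auto
    show "(\<exists>T\<subseteq>S. card T = a \<and> (\<forall>e. e \<subseteq> T \<and> card e = p \<longrightarrow> f e = 1)) \<or>
          (\<exists>T\<subseteq>S. card T = b \<and> (\<forall>e. e \<subseteq> T \<and> card e = p \<longrightarrow> f e = 2))"
    proof (cases "i = 0")
      case True
      have all: "\<forall>e. e \<subseteq> g ` H \<and> card e = p \<longrightarrow> f e = 1"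
      proof (intro allI impI)
        fix e assume e: "e \<subseteq> g ` H \<and> card e = p"
        then obtain e' where "e' \<subseteq> H" "card e' = p" "g ` e' = e" using key by blast
        then have "h e' = 0" using col True by simp
        then have "f (g ` e') = 1" unfolding h_def by (cases "f (g ` e') = 1") simp_all
        then show "f e = 1" using \<open>g ` e' = e\<close> by metis
      qed
      have ck: "card (g ` H) = a" using cT True by simp
      have "\<exists>T\<subseteq>S. card T = a \<and> (\<forall>e. e \<subseteq> T \<and> card e = p \<longrightarrow> f e = 1)"
        by (rule exI[of _ "g ` H"]) (use TS ck all in blast)
      then show ?thesis by (rule disjI1)
    next
      case False
      then have i1: "i = 1" using i by simp
      have all: "\<forall>e. e \<subseteq> g ` H \<and> card e = p \<longrightarrow> f e = 2"
      proof (intro allI impI)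
        fix e assume e: "e \<subseteq> g ` H \<and> card e = p"
        then obtain e' where "e' \<subseteq> H" "card e' = p" "g ` e' = e" using key by blast
        then have "h e' = 1" using col i1 by simp
        then have "f (g ` e') \<noteq> 1" unfolding h_def by (cases "f (g ` e') = 1") simp_all
        then have "f e \<noteq> 1" using \<open>g ` e' = e\<close> by metis
        moreover have "f e \<in> {1,2}" using f e TS by blast
        ultimately show "f e = 2" by auto
      qed
      have ck: "card (g ` H) = b" using cT i1 by simp
      have "\<exists>T\<subseteq>S. card T = b \<and> (\<forall>e. e \<subseteq> T \<and> card e = p \<longrightarrow> f e = 2)"
        by (rule exI[of _ "g ` H"]) (use TS ck all in blast)
      then show ?thesis by (rule disjI2)
    qed
  qed
  then show ?thesis by blast
qed

lemma mu_set_finite: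
  assumes "finite A"
  shows "finite {card A' | A'. A' \<subseteq> A \<and> vertices A' \<subseteq> S}"
proof -
  have "{card A' | A'. A' \<subseteq> A \<and> vertices A' \<subseteq> S} \<subseteq> card ` Pow A" by auto
  then show ?thesis using assms finite_subset by blast
qed

lemma vertices_empty: "vertices ({}::'a::euclidean_space set set) = {}"
  unfolding vertices_def by auto

lemma mu_ge:
  assumes "finite A" "A' \<subseteq> A" "vertices A' \<subseteq> S"
  shows "card A' \<le> mu A S"
  unfolding mu_def using assms mu_set_finite[OF assms(1)] by (intro Max_ge) auto

lemma mu_attained:
  assumes "finite A"
  shows "\<exists>A'. A' \<subseteq> A \<and> vertices A' \<subseteq> S \<and> card A' = mu A S"
proof -
  have ne: "{card A' | A'. A' \<subseteq> A \<and> vertices A' \<subseteq> S} \<noteq> {}"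
    using vertices_empty by blast
  have "mu A S \<in> {card A' | A'. A' \<subseteq> A \<and> vertices A' \<subseteq> S}"
    unfolding mu_def using Max_in[OF mu_set_finite[OF assms] ne] .
  then show ?thesis by auto
qed

lemma vertices_mono: "A \<subseteq> B \<Longrightarrow> vertices A \<subseteq> vertices B"
  unfolding vertices_def by blast

theorem lemma2:
  fixes A :: "'a::euclidean_space set set" and S1 S2 :: "'a set"
  assumes "DIM('a) \<ge> 2"
    and "finite A"
    and "\<forall>H\<in>A. is_hyperplane H"
    and "is_open_halfspace S1"
  shows "mu A (S1 \<union> S2) \<le> ramsey_number DIM('a) (mu A S1 + 1) (mu A S2 + 1) - 1"
proof (rule ccontr)
  let ?p = "DIM('a)" and ?a = "mu A S1 + 1" and ?b = "mu A S2 + 1"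
  define R where "R = ramsey_number ?p ?a ?b"
  have RP: "ramsey_prop ?p ?a ?b R"
    unfolding R_def ramsey_number_def using ramsey_prop_exists by (rule LeastI_ex)
  assume "\<not> ?thesis"
  then have nR: "mu A (S1 \<union> S2) \<ge> R" unfolding R_def by linarith
  obtain A' where A': "A' \<subseteq> A" "vertices A' \<subseteq> S1 \<union> S2" "card A' = mu A (S1 \<union> S2)"
    using mu_attained[OF assms(2)] by blast
  obtain A'' where A'': "A'' \<subseteq> A'" "card A'' = R"
    using obtain_subset_with_card_n nR A'(3) by metis
  have fA'': "finite A''" using A'' A'(1) assms(2) finite_subset by blast
  have VA'': "vertices A'' \<subseteq> S1 \<union> S2" using vertices_mono[OF A''(1)] A'(2) by blast
  obtain g where g: "bij_betw g {0..<R} A''"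
    using ex_bij_betw_nat_finite fA'' A''(2) by blast
  define f where "f e = (if \<exists>q\<in>S1. \<Inter>(g ` e) = {q} then 1 else 2::nat)" for e
  have "(\<exists>T\<subseteq>{0..<R}. card T = ?a \<and> (\<forall>e. e \<subseteq> T \<and> card e = ?p \<longrightarrow> f e = 1)) \<or>
        (\<exists>T\<subseteq>{0..<R}. card T = ?b \<and> (\<forall>e. e \<subseteq> T \<and> card e = ?p \<longrightarrow> f e = 2))"
    using RP unfolding ramsey_prop_def
    by (elim allE[of _ "{0..<R}"] allE[of _ f]) (auto simp: f_def)
  then show False
  proof
    assume "\<exists>T\<subseteq>{0..<R}. card T = ?a \<and> (\<forall>e. e \<subseteq> T \<and> card e = ?p \<longrightarrow> f e = 1)"
    then obtain T where T: "T \<subseteq> {0..<R}" "card T = ?a"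
      "\<forall>e. e \<subseteq> T \<and> card e = ?p \<longrightarrow> f e = 1" by blast
    have inj: "inj_on g T" using g T(1) bij_betw_imp_inj_on inj_on_subset by blast
    have sub: "g ` T \<subseteq> A" using g T(1) A''(1) A'(1) bij_betw_imp_surj_on by blast
    have "vertices (g ` T) \<subseteq> S1"
    proof
      fix x assume "x \<in> vertices (g ` T)"
      then obtain B where B: "B \<subseteq> g ` T" "card B = ?p" "\<Inter>B = {x}"
        unfolding vertices_def by blast
      obtain e where e: "e \<subseteq> T" "g ` e = B" "card e = card B"
        using preimage_sub[OF inj B(1)] by blast
      have "f e = 1" using T(3) e B(2) by auto
      then obtain q where "q \<in> S1" "\<Inter>B = {q}" using e(2) by (auto simp: f_def split: if_splits)
      then show "x \<in> S1" using B(3) by auto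
    qed
    then have "card (g ` T) \<le> mu A S1" using mu_ge[OF assms(2) sub] by blast
    then show False using card_image[OF inj] T(2) by simp
  next
    assume "\<exists>T\<subseteq>{0..<R}. card T = ?b \<and> (\<forall>e. e \<subseteq> T \<and> card e = ?p \<longrightarrow> f e = 2)"
    then obtain T where T: "T \<subseteq> {0..<R}" "card T = ?b"
      "\<forall>e. e \<subseteq> T \<and> card e = ?p \<longrightarrow> f e = 2" by blast
    have inj: "inj_on g T" using g T(1) bij_betw_imp_inj_on inj_on_subset by blast
    have subA'': "g ` T \<subseteq> A''" using g T(1) bij_betw_imp_surj_on by blast
    have sub: "g ` T \<subseteq> A" using subA'' A''(1) A'(1) by blast
    have "vertices (g ` T) \<subseteq> S2"
    proof
      fix x assume x: "x \<in> vertices (g ` T)"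
      then obtain B where B: "B \<subseteq> g ` T" "card B = ?p" "\<Inter>B = {x}"
        unfolding vertices_def by blast
      obtain e where e: "e \<subseteq> T" "g ` e = B" "card e = card B"
        using preimage_sub[OF inj B(1)] by blast
      have "f e = 2" using T(3) e B(2) by auto
      then have "x \<notin> S1" using e(2) B(3) by (auto simp: f_def split: if_splits)
      moreover have "x \<in> S1 \<union> S2" using x vertices_mono[OF subA''] VA'' by blast
      ultimately show "x \<in> S2" by blast
    qed
    then have "card (g ` T) \<le> mu A S2" using mu_ge[OF assms(2) sub] by blast
    then show False using card_image[OF inj] T(2) by simp
  qed
qed

end
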